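(* Let $X$ be a random variable with distribution $P$ on $\mathbb{Z}_+$ and mean $\lambda>0$, and suppose that either $P(k)>0$ for all $k\in\mathbb{Z}_+$, or there is $N$ with $P(k)=0$ for all $k>N$. Then $$\|P-\mathrm{Po}(\lambda)\|_{\mathrm{TV}}\le\sqrt{2K(X)}.$$
   Context: $\|P-Q\|_{\mathrm{TV}}=\sum_{x}|P(x)-Q(x)|$. For $X$ with distribution $P$ on $\mathbb{Z}_+$ and mean $\lambda>0$, the scaled Fisher information is $K(X)=\lambda\sum_{x\ge0}\frac{\big(\frac{(x+1)P(x+1)}{\lambda}-P(x)\big)^2}{P(x)}$ (equivalently $\lambda E[\rho_X(X)^2]$ with $\rho_X(x)=\frac{(x+1)P(x+1)}{\lambda P(x)}-1$), with conventions $0/0=0$, $c/0=\infty$ for $c>0$. $\mathrm{Po}(\lambda)$ is the Poisson distribution with mean $\lambda$. *)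

theory Defs
  imports "HOL-Analysis.Analysis"
begin

text \<open>A distribution on Z_+ is a function P :: nat => real, nonnegative, summing to 1.\<close>

definition poisson :: "real \<Rightarrow> nat \<Rightarrow> real" where
  "poisson lam k = exp (- lam) * lam ^ k / fact k"

text \<open>Total variation distance as in the paper (no factor 1/2).\<close>
definition tv_dist :: "(nat \<Rightarrow> real) \<Rightarrow> (nat \<Rightarrow> real) \<Rightarrow> real" where
  "tv_dist P Q = (\<Sum>x. \<bar>P x - Q x\<bar>)"

definition sfi_term :: "(nat \<Rightarrow> real) \<Rightarrow> real \<Rightarrow> nat \<Rightarrow> ennreal" where
  "sfi_term P lam x =
     (let d = real (x + 1) * P (x + 1) / lam - P x in
      if P x = 0 then (if d = 0 then 0 else \<infinity>) else ennreal (d\<^sup>2 / P x))"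

definition scaled_fisher :: "(nat \<Rightarrow> real) \<Rightarrow> real \<Rightarrow> ennreal" where
  "scaled_fisher P lam = ennreal lam * (\<Sum>x. sfi_term P lam x)"

definition ennsqrt :: "ennreal \<Rightarrow> ennreal" where
  "ennsqrt a = (if a = \<infinity> then \<infinity> else ennreal (sqrt (enn2real a)))"

end

theory Submission
  imports Defs
begin

lemma poisson_pos: "lam > 0 \<Longrightarrow> poisson lam k > 0"
  by (simp add: poisson_def)

lemma poisson_Suc: "poisson lam (Suc k) = lam * poisson lam k / (real k + 1)"
  by (simp add: poisson_def field_simps)

lemma poisson_sums: "poisson lam sums 1"
proof -
  have "(\<lambda>n. exp (-lam) * (lam^n /\<^sub>R fact n)) sums (exp (-lam) * exp lam)"
    by (rule sums_mult[OF exp_converges])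
  moreover have "exp (-lam) * exp lam = 1" by (simp add: exp_minus)
  moreover have "poisson lam = (\<lambda>n. exp (-lam) * (lam^n /\<^sub>R fact n))"
    by (auto simp: poisson_def fun_eq_iff field_simps)
  ultimately show ?thesis by simp
qed

definition pF :: "real \<Rightarrow> nat \<Rightarrow> real" where
  "pF lam n = (\<Sum>k\<le>n. poisson lam k)"

lemma pF_lim: "(\<lambda>n. pF lam n) \<longlonglongrightarrow> 1"
  using poisson_sums[of lam] unfolding sums_def_le pF_def .

lemma pF_Suc: "pF lam (Suc n) = pF lam n + poisson lam (Suc n)"
  by (simp add: pF_def)

lemma pF_nonneg: "lam > 0 \<Longrightarrow> pF lam n \<ge> 0"
  unfolding pF_def by (intro sum_nonneg) (auto intro: less_imp_le poisson_pos)

lemma pF_mono: "lam > 0 \<Longrightarrow> m \<le> n \<Longrightarrow> pF lam m \<le> pF lam n"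
  unfolding pF_def by (intro sum_mono2) (auto intro: less_imp_le poisson_pos)

lemma lemB:
  assumes lam: "lam > 0"
  shows "(sqrt (lam/2) - real x / 2 - 1/4 + lam/2) * pF lam x \<le> lam * poisson lam x"
proof (induction x)
  case 0
  define s where "s = sqrt (lam/2)"
  have ss: "s * s = lam / 2" using lam by (simp add: s_def)
  have "(s - 1/2)^2 = s * s - s + 1/4" by (simp add: power2_eq_square algebra_simps)
  moreover have "(s - 1/2)^2 \<ge> 0" by simp
  ultimately have "s - 0 / 2 - 1/4 + lam/2 \<le> lam" using ss by linarith
  moreover have "poisson lam 0 > 0" using poisson_pos[OF lam] .
  ultimately show ?case by (simp add: pF_def s_def)
next
  case (Suc x)
  define s where "s = sqrt (lam/2)"
  have ss: "s * s = lam / 2" using lam by (simp add: s_def)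
  define Bx where "Bx = s - real x / 2 - 1/4 + lam/2"
  define B' where "B' = s - real (Suc x) / 2 - 1/4 + lam/2"
  define Q' where "Q' = poisson lam (Suc x)"
  define F where "F = pF lam x"
  have Q'pos: "Q' > 0" using poisson_pos[OF lam] by (simp add: Q'_def)
  have Fnn: "F \<ge> 0" using pF_nonneg[OF lam] by (simp add: F_def)
  have lq: "lam * poisson lam x = (real x + 1) * Q'"
    using lam by (simp add: Q'_def poisson_Suc field_simps)
  have IH: "Bx * F \<le> (real x + 1) * Q'" using Suc.IH lq by (simp add: Bx_def s_def F_def)
  have goal: "B' * (F + Q') \<le> lam * Q'"
  proof (cases "B' \<le> 0")
    case True
    then have "B' * (F + Q') \<le> 0" using Fnn Q'pos by (simp add: mult_nonpos_nonneg)
    then show ?thesis using lam Q'pos by (smt (verit) mult_pos_pos)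
  next
    case False
    then have Bp: "B' > 0" by simp
    have BxB: "Bx = B' + 1/2" by (simp add: Bx_def B'_def field_simps)
    have lamss: "lam = 2 * s * s" using ss by simp
    have eX: "real x + 1 = 2 * s - 2 * B' + 2 * s * s - 1/2" using lamss by (simp add: B'_def algebra_simps)
    have "lam * Bx - (B' * (real x + 1) + B' * Bx) = (B' - s)^2"
      unfolding eX BxB lamss by (simp add: power2_eq_square algebra_simps)
    then have key: "B' * (real x + 1) + B' * Bx \<le> lam * Bx"
      by (smt (verit) zero_le_power2)
    have "Bx * (B' * (F + Q')) = B' * (Bx * F) + Bx * B' * Q'" by (simp add: algebra_simps)
    also have "\<dots> \<le> B' * ((real x + 1) * Q') + Bx * B' * Q'"
      using IH Bp by (intro add_right_mono mult_left_mono) auto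
    also have "\<dots> = Q' * (B' * (real x + 1) + B' * Bx)" by (simp add: algebra_simps)
    also have "\<dots> \<le> Q' * (lam * Bx)" using key Q'pos by (intro mult_left_mono) auto
    finally have "Bx * (B' * (F + Q')) \<le> Bx * (lam * Q')" by (simp add: algebra_simps)
    moreover have "Bx > 0" using Bp BxB by simp
    ultimately show ?thesis by simp
  qed
  show ?case using goal by (simp add: B'_def s_def F_def Q'_def pF_Suc)
qed

lemma lemA_fin:
  assumes lam: "lam > 0" and xN: "x \<le> N"
  shows "(sqrt (lam/2) + real x / 2 + 1/4 - lam/2) * (pF lam N - pF lam x) \<le> lam * poisson lam x"
  using xN
proof (induction x rule: inc_induct)
  case base
  then show ?case using poisson_pos[OF lam, of N] lam by (simp add: zero_le_mult_iff)
next
  case (step x)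
  define s where "s = sqrt (lam/2)"
  have ss: "s * s = lam / 2" using lam by (simp add: s_def)
  define Ax where "Ax = s + real x / 2 + 1/4 - lam/2"
  define A' where "A' = s + real (Suc x) / 2 + 1/4 - lam/2"
  define Q' where "Q' = poisson lam (Suc x)"
  define R where "R = pF lam N - pF lam (Suc x)"
  have Q'pos: "Q' > 0" using poisson_pos[OF lam] by (simp add: Q'_def)
  have Rnn: "R \<ge> 0" using pF_mono[OF lam, of "Suc x" N] step.hyps by (simp add: R_def)
  have lq: "lam * poisson lam x = (real x + 1) * Q'"
    using lam by (simp add: Q'_def poisson_Suc field_simps)
  have IH: "A' * R \<le> lam * Q'" using step.IH by (simp add: A'_def s_def R_def Q'_def)
  have eq: "pF lam N - pF lam x = Q' + R" by (simp add: R_def Q'_def pF_Suc)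
  have goal: "Ax * (Q' + R) \<le> (real x + 1) * Q'"
  proof (cases "Ax \<le> 0")
    case True
    then have "Ax * (Q' + R) \<le> 0" using Rnn Q'pos by (simp add: mult_nonpos_nonneg)
    then show ?thesis using Q'pos by (smt (verit) of_nat_0_le_iff mult_pos_pos)
  next
    case False
    then have Ap: "Ax > 0" by simp
    have AA: "A' = Ax + 1/2" by (simp add: Ax_def A'_def field_simps)
    have lamss: "lam = 2 * s * s" using ss by simp
    have eX: "real x + 1 = 2 * Ax - 2 * s + 2 * s * s + 1/2" using lamss by (simp add: Ax_def algebra_simps)
    have "(real x + 1) * A' - Ax * (A' + lam) = (Ax - s + 1/2)^2"
      unfolding eX AA lamss by (simp add: power2_eq_square algebra_simps)
    then have key: "Ax * (A' + lam) \<le> (real x + 1) * A'"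
      by (smt (verit) zero_le_power2)
    have "A' * (Ax * (Q' + R)) = Ax * A' * Q' + Ax * (A' * R)" by (simp add: algebra_simps)
    also have "\<dots> \<le> Ax * A' * Q' + Ax * (lam * Q')"
      using IH Ap by (intro add_left_mono mult_left_mono) auto
    also have "\<dots> = Q' * (Ax * (A' + lam))" by (simp add: algebra_simps)
    also have "\<dots> \<le> Q' * ((real x + 1) * A')" using key Q'pos by (intro mult_left_mono) auto
    finally have "A' * (Ax * (Q' + R)) \<le> A' * ((real x + 1) * Q')" by (simp add: algebra_simps)
    moreover have "A' > 0" using Ap AA by simp
    ultimately show ?thesis by simp
  qed
  show ?case using goal eq lq by (simp add: Ax_def s_def)
qed

lemma lemA:
  assumes lam: "lam > 0"
  shows "(sqrt (lam/2) + real x / 2 + 1/4 - lam/2) * (1 - pF lam x) \<le> lam * poisson lam x"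
proof -
  let ?A = "sqrt (lam/2) + real x / 2 + 1/4 - lam/2"
  have "(\<lambda>N. ?A * (pF lam N - pF lam x)) \<longlonglongrightarrow> ?A * (1 - pF lam x)"
    by (intro tendsto_intros pF_lim)
  moreover have "\<exists>N0. \<forall>N\<ge>N0. ?A * (pF lam N - pF lam x) \<le> lam * poisson lam x"
    using lemA_fin[OF lam] by blast
  ultimately show ?thesis by (rule LIMSEQ_le_const2)
qed

lemma lemL:
  assumes lam: "lam > 0"
  shows "pF lam x * (1 - pF lam x) \<le> sqrt (lam/2) * poisson lam x"
proof -
  define s where "s = sqrt (lam/2)"
  have ss: "s * s = lam / 2" using lam by (simp add: s_def)
  have sp: "s > 0" using lam by (simp add: s_def)
  define F where "F = pF lam x"
  define Q where "Q = poisson lam x"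
  define A where "A = s + real x / 2 + 1/4 - lam/2"
  define B where "B = s - real x / 2 - 1/4 + lam/2"
  have hA: "A * (1 - F) \<le> lam * Q" using lemA[OF lam, of x] by (simp add: A_def F_def Q_def s_def)
  have hB: "B * F \<le> lam * Q" using lemB[OF lam, of x] by (simp add: B_def F_def Q_def s_def)
  have F0: "F \<ge> 0" using pF_nonneg[OF lam] by (simp add: F_def)
  have "pF lam x \<le> 1"
    using LIMSEQ_le_const[OF pF_lim, of "pF lam x" lam] pF_mono[OF lam] by blast
  then have F1: "1 - F \<ge> 0" by (simp add: F_def)
  have "A * (1 - F) * F + B * F * (1 - F) \<le> lam * Q * F + lam * Q * (1 - F)"
    using hA hB F0 F1 by (intro add_mono mult_right_mono) auto
  also have "\<dots> = lam * Q" by (simp add: algebra_simps)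
  finally have "(A + B) * (F * (1 - F)) \<le> lam * Q" by (simp add: algebra_simps)
  moreover have "A + B = 2 * s" by (simp add: A_def B_def)
  ultimately have "2 * s * (F * (1 - F)) \<le> 2 * s * (s * Q)" using ss by (simp add: algebra_simps)
  then show ?thesis using sp by (simp add: F_def Q_def s_def)
qed


lemma pF_le1: "lam > 0 \<Longrightarrow> pF lam x \<le> 1"
  using LIMSEQ_le_const[OF pF_lim, of "pF lam x" lam] pF_mono[of lam] by blast

lemma sum_atMost_diff:
  fixes f :: "nat \<Rightarrow> real"
  assumes "n \<le> N"
  shows "(\<Sum>k\<le>N. f k) - (\<Sum>k\<le>n. f k) = (\<Sum>k\<in>{n<..N}. f k)"
proof -
  have "{..N} = {..n} \<union> {n<..N}" using assms by auto
  then have "(\<Sum>k\<le>N. f k) = (\<Sum>k\<le>n. f k) + (\<Sum>k\<in>{n<..N}. f k)"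
    by (simp add: sum.union_disjoint ivl_disj_int)
  then show ?thesis by simp
qed

lemma ident_step:
  fixes q m lam Pa Pb Hn e :: real
  assumes "q > 0" "m > 0" "lam > 0"
  shows "(Pb / (lam * q / m) - 1) * (Hn + (lam * q / m) * e) - Hn / q * (m * Pb / lam - Pa)
        = (Pa / q - 1) * Hn + (Pb - lam * q / m) * e"
  using assms by (simp add: field_simps)

lemma main_real:
  fixes P :: "nat \<Rightarrow> real" and lam D :: real
  assumes nonneg: "\<And>k. P k \<ge> 0"
    and prob: "P sums 1"
    and lam: "lam > 0"
    and zero: "\<And>x. P x = 0 \<Longrightarrow> real (x + 1) * P (x + 1) / lam - P x = 0"
    and tsum: "(\<lambda>x. if P x = 0 then 0 else (real (x + 1) * P (x + 1) / lam - P x)\<^sup>2 / P x) sums D"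
  shows "tv_dist P (poisson lam) \<le> sqrt (2 * lam * D)"
proof -
  define Q where "Q = poisson lam"
  define h where "h x = (if Q x \<le> P x then 1 else -1 :: real)" for x
  define c where "c = (\<Sum>k. Q k * h k)"
  define S1 where "S1 n = (\<Sum>k\<le>n. Q k * h k)" for n
  define H where "H n = (\<Sum>k\<le>n. Q k * (h k - c))" for n
  define g where "g n = H n / Q n" for n
  define d where "d n = real (n + 1) * P (n + 1) / lam - P n" for n
  define t where "t x = (if P x = 0 then 0 else (d x)\<^sup>2 / P x)" for x
  define s where "s = sqrt (lam / 2)"
  define F where "F = pF lam"
  have ss: "s * s = lam / 2" using lam by (simp add: s_def)
  have sp: "s > 0" using lam by (simp add: s_def)
  have Qpos: "Q k > 0" for k using poisson_pos[OF lam] by (simp add: Q_def)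
  have Qabs: "\<bar>Q k\<bar> = Q k" for k using Qpos[of k] by simp
  have Qsum: "Q sums 1" using poisson_sums by (simp add: Q_def)
  have habs: "\<bar>h k\<bar> = 1" for k by (simp add: h_def)
  have tsum': "t sums D" using tsum unfolding t_def[abs_def] d_def[abs_def] by simp
  have tnn: "t x \<ge> 0" for x using nonneg[of x] by (simp add: t_def)
  have dz: "P x = 0 \<Longrightarrow> d x = 0" for x using zero by (simp add: d_def)
  have Qhsum: "summable (\<lambda>k. Q k * h k)"
  proof (rule summable_comparison_test[of _ Q])
    show "\<exists>N. \<forall>n\<ge>N. norm (Q n * h n) \<le> Q n"
      using Qpos habs by (auto simp: abs_mult intro!: exI[of _ 0] less_imp_le)
    show "summable Q" using Qsum by (simp add: sums_iff)
  qed
  have S1lim: "S1 \<longlonglongrightarrow> c"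
    using Qhsum unfolding c_def S1_def by (simp add: summable_sums sums_def_le[symmetric])
  have Flim: "F \<longlonglongrightarrow> 1" using pF_lim by (simp add: F_def)
  have F_def': "F n = (\<Sum>k\<le>n. Q k)" for n by (simp add: F_def pF_def Q_def)
  have F0: "F n \<ge> 0" for n using pF_nonneg[OF lam] by (simp add: F_def)
  have F1: "F n \<le> 1" for n using pF_le1[OF lam] by (simp add: F_def)
  have Heq: "H n = S1 n - c * F n" for n
    by (simp add: H_def S1_def F_def' algebra_simps sum_subtractf sum_distrib_left)
  have Hlim: "H \<longlonglongrightarrow> 0"
  proof -
    have "(\<lambda>n. S1 n - c * F n) \<longlonglongrightarrow> c - c * 1" by (intro tendsto_intros S1lim Flim)
    moreover have "H = (\<lambda>n. S1 n - c * F n)" using Heq by (simp add: fun_eq_iff)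
    ultimately show ?thesis by simp
  qed
  have absS1: "\<bar>S1 n\<bar> \<le> F n" for n
  proof -
    have "\<bar>S1 n\<bar> \<le> (\<Sum>k\<le>n. \<bar>Q k * h k\<bar>)" unfolding S1_def by (rule sum_abs)
    also have "\<dots> = F n" using Qpos habs by (simp add: F_def' abs_mult Qabs)
    finally show ?thesis .
  qed
  have tail: "\<bar>c - S1 n\<bar> \<le> 1 - F n" for n
  proof (rule LIMSEQ_le)
    show "(\<lambda>N. \<bar>S1 N - S1 n\<bar>) \<longlonglongrightarrow> \<bar>c - S1 n\<bar>" by (intro tendsto_intros S1lim)
    show "(\<lambda>N. F N - F n) \<longlonglongrightarrow> 1 - F n" by (intro tendsto_intros Flim)
    show "\<exists>N0. \<forall>N\<ge>N0. \<bar>S1 N - S1 n\<bar> \<le> F N - F n"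
    proof (intro exI allI impI)
      fix N assume nN: "n \<le> N"
      have "\<bar>S1 N - S1 n\<bar> = \<bar>\<Sum>k\<in>{n<..N}. Q k * h k\<bar>"
        unfolding S1_def using sum_atMost_diff[OF nN] by metis
      also have "\<dots> \<le> (\<Sum>k\<in>{n<..N}. \<bar>Q k * h k\<bar>)" by (rule sum_abs)
      also have "\<dots> = (\<Sum>k\<in>{n<..N}. Q k)" using Qpos habs by (simp add: abs_mult Qabs)
      also have "\<dots> = F N - F n" unfolding F_def' using sum_atMost_diff[OF nN] by metis
      finally show "\<bar>S1 N - S1 n\<bar> \<le> F N - F n" .
    qed
  qed
  have Hbound: "\<bar>H n\<bar> \<le> 2 * F n * (1 - F n)" for n
  proof -
    have Hn: "H n = S1 n * (1 - F n) - (c - S1 n) * F n" by (simp add: Heq algebra_simps)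
    then have "\<bar>H n\<bar> \<le> \<bar>S1 n\<bar> * (1 - F n) + \<bar>c - S1 n\<bar> * F n"
    proof -
      have "\<bar>H n\<bar> \<le> \<bar>S1 n * (1 - F n)\<bar> + \<bar>(c - S1 n) * F n\<bar>"
        using Hn abs_triangle_ineq4 by metis
      moreover have "\<bar>S1 n * (1 - F n)\<bar> = \<bar>S1 n\<bar> * (1 - F n)" using F1[of n] by (simp add: abs_mult)
      moreover have "\<bar>(c - S1 n) * F n\<bar> = \<bar>c - S1 n\<bar> * F n" using F0[of n] by (simp add: abs_mult)
      ultimately show ?thesis by simp
    qed
    also have "\<dots> \<le> F n * (1 - F n) + (1 - F n) * F n"
      using absS1[of n] tail[of n] F0[of n] F1[of n] by (intro add_mono mult_right_mono) auto
    finally show ?thesis by simp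
  qed
  have gbound: "\<bar>g n\<bar> \<le> 2 * s" for n
  proof -
    have "\<bar>H n\<bar> \<le> 2 * s * Q n"
      using Hbound[of n] lemL[OF lam, of n] by (simp add: F_def Q_def s_def)
    then show ?thesis using Qpos[of n] by (simp add: g_def abs_divide pos_divide_le_eq)
  qed
  have ident: "(\<Sum>k\<le>n. (P k - Q k) * (h k - c)) = (P n / Q n - 1) * H n - (\<Sum>k<n. g k * d k)" for n
  proof (induction n)
    case 0
    then show ?case using Qpos[of 0] by (simp add: H_def field_simps)
  next
    case (Suc n)
    have HS: "H (Suc n) = H n + Q (Suc n) * (h (Suc n) - c)" by (simp add: H_def)
    have QS: "Q (Suc n) = lam * Q n / real (n + 1)" by (simp add: Q_def poisson_Suc)
    have key: "(P (Suc n) / Q (Suc n) - 1) * (H n + Q (Suc n) * (h (Suc n) - c)) - g n * d n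
        = (P n / Q n - 1) * H n + (P (Suc n) - Q (Suc n)) * (h (Suc n) - c)"
      unfolding QS g_def d_def
      using ident_step[where q="Q n" and m="real (n+1)" and lam=lam and Pa="P n" and Pb="P (Suc n)" and Hn="H n" and e="h (Suc n) - c"] Qpos[of n] lam
      by simp
    have "(\<Sum>k\<le>Suc n. (P k - Q k) * (h k - c)) = (\<Sum>k\<le>n. (P k - Q k) * (h k - c)) + (P (Suc n) - Q (Suc n)) * (h (Suc n) - c)"
      by simp
    also have "\<dots> = (P n / Q n - 1) * H n - (\<Sum>k<n. g k * d k) + (P (Suc n) - Q (Suc n)) * (h (Suc n) - c)"
      using Suc.IH by simp
    also have "\<dots> = (P (Suc n) / Q (Suc n) - 1) * H (Suc n) - (\<Sum>k<Suc n. g k * d k)"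
      using key unfolding HS by simp
    finally show ?case .
  qed
  have CS: "\<bar>\<Sum>k<n. g k * d k\<bar> \<le> sqrt (2 * lam * D)" for n
  proof -
    define u where "u k = \<bar>g k\<bar> * sqrt (P k)" for k
    define v where "v k = (if P k = 0 then 0 else \<bar>d k\<bar> / sqrt (P k))" for k
    have uv: "\<bar>g k * d k\<bar> = u k * v k" for k
    proof (cases "P k = 0")
      case True then show ?thesis using dz by (simp add: u_def v_def)
    next
      case False
      then have "sqrt (P k) > 0" using nonneg[of k] by simp
      then show ?thesis using False by (simp add: u_def v_def abs_mult)
    qed
    have v2: "(v k)\<^sup>2 = t k" for k
      using nonneg[of k] by (simp add: v_def t_def power_divide)
    have u2: "(u k)\<^sup>2 \<le> 2 * lam * P k" for k
    proof -
      have "\<bar>g k\<bar>\<^sup>2 \<le> (2 * s)\<^sup>2" using gbound[of k] by (intro power_mono) auto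
      also have "\<dots> = 2 * lam" using ss by (simp add: power2_eq_square algebra_simps)
      finally show ?thesis using nonneg[of k]
        by (simp add: u_def power_mult_distrib mult_right_mono)
    qed
    have sP: "(\<Sum>k<n. P k) \<le> 1"
      using sum_le_suminf[of P "{..<n}"] prob nonneg by (auto simp: sums_iff)
    have sT: "(\<Sum>k<n. t k) \<le> D"
      using sum_le_suminf[of t "{..<n}"] tsum' tnn by (auto simp: sums_iff)
    have "(\<Sum>k<n. u k * v k)\<^sup>2 \<le> (\<Sum>k<n. (u k)\<^sup>2) * (\<Sum>k<n. (v k)\<^sup>2)"
      by (rule Cauchy_Schwarz_ineq_sum)
    also have "\<dots> \<le> (2 * lam) * D"
    proof (rule mult_mono)
      have "(\<Sum>k<n. (u k)\<^sup>2) \<le> (\<Sum>k<n. 2 * lam * P k)" by (intro sum_mono u2)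
      also have "\<dots> = 2 * lam * (\<Sum>k<n. P k)" by (simp add: sum_distrib_left)
      also have "\<dots> \<le> 2 * lam" using sP lam by simp
      finally show "(\<Sum>k<n. (u k)\<^sup>2) \<le> 2 * lam" .
      show "(\<Sum>k<n. (v k)\<^sup>2) \<le> D" using sT v2 by simp
      show "0 \<le> 2 * lam" using lam by simp
      show "0 \<le> (\<Sum>k<n. (v k)\<^sup>2)" by (intro sum_nonneg) simp
    qed
    finally have "(\<Sum>k<n. u k * v k) \<le> sqrt (2 * lam * D)" by (intro real_le_rsqrt) simp
    moreover have "\<bar>\<Sum>k<n. g k * d k\<bar> \<le> (\<Sum>k<n. u k * v k)"
      using sum_abs[of "\<lambda>k. g k * d k" "{..<n}"] uv by simp
    ultimately show ?thesis by linarith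
  qed
  have bound_n: "(\<Sum>k\<le>n. \<bar>P k - Q k\<bar>) \<le> \<bar>c\<bar> * \<bar>\<Sum>k\<le>n. (P k - Q k)\<bar> + 2 * s * P n + \<bar>H n\<bar> + sqrt (2 * lam * D)" for n
  proof -
    have "(\<Sum>k\<le>n. \<bar>P k - Q k\<bar>) = (\<Sum>k\<le>n. (P k - Q k) * h k)"
      by (intro sum.cong) (auto simp: h_def)
    also have "\<dots> = (\<Sum>k\<le>n. (P k - Q k) * (h k - c)) + c * (\<Sum>k\<le>n. (P k - Q k))"
      by (simp add: sum_distrib_left algebra_simps sum.distrib[symmetric])
    also have "\<dots> = P n * g n - H n - (\<Sum>k<n. g k * d k) + c * (\<Sum>k\<le>n. (P k - Q k))"
    proof -
      have "(P n / Q n - 1) * H n = P n * g n - H n" by (simp add: g_def algebra_simps)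
      then show ?thesis using ident[of n] by simp
    qed
    also have "\<dots> \<le> \<bar>P n * g n\<bar> + \<bar>H n\<bar> + \<bar>\<Sum>k<n. g k * d k\<bar> + \<bar>c\<bar> * \<bar>\<Sum>k\<le>n. (P k - Q k)\<bar>"
      by (smt (verit) abs_mult abs_ge_self abs_minus_cancel abs_le_iff)
    also have "\<dots> \<le> 2 * s * P n + \<bar>H n\<bar> + sqrt (2 * lam * D) + \<bar>c\<bar> * \<bar>\<Sum>k\<le>n. (P k - Q k)\<bar>"
    proof -
      have "\<bar>P n * g n\<bar> \<le> P n * (2 * s)"
        using gbound[of n] nonneg[of n] by (simp add: abs_mult mult_left_mono)
      then show ?thesis using CS[of n] by (simp add: algebra_simps)
    qed
    finally show ?thesis by simp
  qed
  have Psum: "summable P" using prob by (simp add: sums_iff)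
  have absSum: "summable (\<lambda>k. \<bar>P k - Q k\<bar>)"
  proof (rule summable_comparison_test[of _ "\<lambda>k. P k + Q k"])
    show "\<exists>N. \<forall>n\<ge>N. norm \<bar>P n - Q n\<bar> \<le> P n + Q n"
      using nonneg Qpos by (auto intro!: exI[of _ 0]) (smt (verit) less_imp_le)
    show "summable (\<lambda>k. P k + Q k)" using Psum Qsum by (intro summable_add) (auto simp: sums_iff)
  qed
  have L1: "(\<lambda>n. \<Sum>k\<le>n. \<bar>P k - Q k\<bar>) \<longlonglongrightarrow> tv_dist P (poisson lam)"
    using absSum unfolding tv_dist_def Q_def[symmetric] by (simp add: summable_sums sums_def_le[symmetric])
  have L2: "(\<lambda>n. \<Sum>k\<le>n. (P k - Q k)) \<longlonglongrightarrow> 1 - 1"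
    using sums_diff[OF prob Qsum] by (simp add: sums_def_le)
  have L3: "P \<longlonglongrightarrow> 0" using Psum by (rule summable_LIMSEQ_zero)
  have R: "(\<lambda>n. \<bar>c\<bar> * \<bar>\<Sum>k\<le>n. (P k - Q k)\<bar> + 2 * s * P n + \<bar>H n\<bar> + sqrt (2 * lam * D))
      \<longlonglongrightarrow> \<bar>c\<bar> * \<bar>1 - 1\<bar> + 2 * s * 0 + \<bar>0\<bar> + sqrt (2 * lam * D)"
    by (intro tendsto_intros L2 L3 Hlim)
  show ?thesis
    using LIMSEQ_le[OF L1 R] bound_n by simp
qed


theorem mainTheorem4:
  fixes P :: "nat \<Rightarrow> real" and lam :: real
  assumes nonneg: "\<And>k. P k \<ge> 0"
    and prob: "P sums 1"
    and mean: "(\<lambda>k. real k * P k) sums lam"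
    and lam_pos: "lam > 0"
    and supp: "(\<forall>k. P k > 0) \<or> (\<exists>N. \<forall>k>N. P k = 0)"
  shows "ennreal (tv_dist P (poisson lam)) \<le> ennsqrt (2 * scaled_fisher P lam)"
proof (cases "(\<Sum>x. sfi_term P lam x) = top")
  case True
  have "scaled_fisher P lam = top"
    unfolding scaled_fisher_def True using lam_pos by (simp add: ennreal_mult_top)
  then have "2 * scaled_fisher P lam = top" by (simp add: ennreal_mult_top)
  then show ?thesis by (simp add: ennsqrt_def)
next
  case False
  define t where "t x = (if P x = 0 then 0 else (real (x + 1) * P (x + 1) / lam - P x)\<^sup>2 / P x)" for x
  have fin: "sfi_term P lam x < top" for x
    using ennreal_suminf_lessD[of "sfi_term P lam" top x] False by (simp add: top.not_eq_extremum)
  have zero: "real (x + 1) * P (x + 1) / lam - P x = 0" if "P x = 0" for x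
    using fin[of x] that by (auto simp: sfi_term_def Let_def split: if_splits)
  have teq: "sfi_term P lam x = ennreal (t x)" for x
    using zero[of x] by (auto simp: sfi_term_def t_def Let_def)
  have tnn: "t x \<ge> 0" for x using nonneg[of x] by (simp add: t_def)
  have Sne: "(\<Sum>x. ennreal (t x)) \<noteq> top" using False teq by simp
  have tsum: "summable t" using summable_suminf_not_top[OF tnn Sne] .
  define D where "D = suminf t"
  have D0: "D \<ge> 0" using tsum tnn by (simp add: D_def suminf_nonneg)
  have S: "(\<Sum>x. sfi_term P lam x) = ennreal D"
    using suminf_ennreal2[OF tnn tsum] teq by (simp add: D_def)
  have K: "2 * scaled_fisher P lam = ennreal (2 * lam * D)"
  proof -
    have "scaled_fisher P lam = ennreal (lam * D)"
      unfolding scaled_fisher_def S using lam_pos D0 by (simp add: ennreal_mult)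
    moreover have "(2::ennreal) * ennreal (lam * D) = ennreal (2 * (lam * D))"
      using ennreal_mult[of 2 "lam * D"] lam_pos D0 by simp
    ultimately show ?thesis by (simp add: mult.assoc)
  qed
  have main: "tv_dist P (poisson lam) \<le> sqrt (2 * lam * D)"
  proof (rule main_real[OF nonneg prob lam_pos zero])
    show "(\<lambda>x. if P x = 0 then 0 else (real (x + 1) * P (x + 1) / lam - P x)\<^sup>2 / P x) sums D"
      using tsum unfolding D_def t_def[abs_def] by (simp add: summable_sums)
  qed
  have "ennsqrt (2 * scaled_fisher P lam) = ennreal (sqrt (2 * lam * D))"
    unfolding K ennsqrt_def using lam_pos D0 by simp
  then show ?thesis using main by (simp add: ennreal_leI)
qed

end
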